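(* Let $g\in\mathcal F$, $h\in[H]$, let $P$ be a probability distribution over $\mathcal F$, and let $G$ be the distribution of the function $g\circ_h f$ when $f\sim P$. Suppose that for constants $C_1,C_2,C_3$: (a) for every $f\in\operatorname{supp}(G)$, $\eta(f,g,h)>\eta(g,g,h)-C_1$; (b) $\Big|\mathbb E_{f\sim G}\mathbb E_{x'\sim\mathcal D_{f,h+1}}[V^{\pi_f}_{h+1}(x')]-\mathbb E_{f\sim G}\mathbb E_{x'\sim\mathcal D_{f,h+1}}[f(x',\pi_f(x'))]\Big|\le C_2$; (c) $\Big|\mathbb E_{x'\sim\mathcal D_{g,h+1}}[V^{\pi_g}_{h+1}(x')]-\mathbb E_{x'\sim\mathcal D_{g,h+1}}[g(x',\pi_g(x'))]\Big|\le C_3$. Then $\mathbb E_{f\sim G}[V^{\pi_f}]\ge V^{\pi_g}-(C_1+C_2+C_3)$.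
   Context: Episodic MDP with layered state space $\mathcal X=\mathcal X_1\cup\dots\cup\mathcal X_H$ (disjoint), finite action set $\mathcal A$, transitions $p(\cdot\mid x,a)$ from $\mathcal X_h$ to $\mathcal X_{h+1}$, (expected) reward $r(x,a)$, deterministic initial state $x_1\in\mathcal X_1$. $\mathcal F$ is a finite class of functions $\mathcal X\times\mathcal A\to[0,1]$. For any function $f:\mathcal X\times\mathcal A\to\mathbb R$, $\pi_f(x)=\arg\max_a f(x,a)$; $\mathcal D_{f,h}$ is the distribution of $x_h$ when $\pi_f$ is run from $x_1$; $V^\pi_h(x)$ is the expected reward-to-go from $x\in\mathcal X_h$ under $\pi$ (with $V^\pi_{H+1}\equiv0$ and all functions vanishing at layer $H+1$), and $V^\pi=V^\pi_1(x_1)$. Concatenation: $(f_1\circ_h f_2)(x,a)=f_1(x,a)$ if $x\in\mathcal X_1\cup\dots\cup\mathcal X_{h-1}$ and $=f_2(x,a)$ otherwise. Predicted performance: $\eta(f,g,h)=\mathbb E_{x\sim\mathcal D_{g,h}}\mathbb E_{x'\sim p(\cdot\mid x,\pi_f(x))}[r(x,\pi_f(x))+f(x',\pi_f(x'))]$. *)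

theory Defs
  imports "HOL-Probability.Probability"
begin

text \<open>States have type 'x, the layer of a state is given by
  a function layer :: 'x => nat (layers 1..H are the real states; a state of layer H+1
  is a terminal state where all functions vanish).\<close>

definition greedy :: "('x \<Rightarrow> 'a::finite \<Rightarrow> real) \<Rightarrow> 'x \<Rightarrow> 'a" where
  "greedy f x = (SOME a. \<forall>b. f x b \<le> f x a)"

definition concat_at :: "('x \<Rightarrow> nat) \<Rightarrow> ('x \<Rightarrow> 'a \<Rightarrow> real) \<Rightarrow> nat \<Rightarrow> ('x \<Rightarrow> 'a \<Rightarrow> real)
    \<Rightarrow> 'x \<Rightarrow> 'a \<Rightarrow> real" where
  "concat_at layer f1 h f2 x a = (if layer x < h then f1 x a else f2 x a)"

fun state_dist :: "('x \<Rightarrow> 'a \<Rightarrow> 'x pmf) \<Rightarrow> 'x \<Rightarrow> ('x \<Rightarrow> 'a) \<Rightarrow> nat \<Rightarrow> 'x pmf" where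
  "state_dist p x1 \<pi> 0 = return_pmf x1"
| "state_dist p x1 \<pi> (Suc k) = bind_pmf (state_dist p x1 \<pi> k) (\<lambda>x. p x (\<pi> x))"

definition D :: "('x \<Rightarrow> 'a \<Rightarrow> 'x pmf) \<Rightarrow> 'x \<Rightarrow> ('x \<Rightarrow> 'a) \<Rightarrow> nat \<Rightarrow> 'x pmf" where
  "D p x1 \<pi> h = state_dist p x1 \<pi> (h - 1)"

text \<open>Expected reward-to-go with k steps remaining; V^pi_h(x) = value_togo ... (H+1-h) x
  for x in layer h (so V^pi_{H+1} = 0).\<close>
fun value_togo :: "('x \<Rightarrow> 'a \<Rightarrow> real) \<Rightarrow> ('x \<Rightarrow> 'a \<Rightarrow> 'x pmf) \<Rightarrow> ('x \<Rightarrow> 'a) \<Rightarrow> nat \<Rightarrow> 'x \<Rightarrow> real" where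
  "value_togo r p \<pi> 0 x = 0"
| "value_togo r p \<pi> (Suc k) x =
     r x (\<pi> x) + measure_pmf.expectation (p x (\<pi> x)) (value_togo r p \<pi> k)"

definition V_h :: "nat \<Rightarrow> ('x \<Rightarrow> 'a \<Rightarrow> real) \<Rightarrow> ('x \<Rightarrow> 'a \<Rightarrow> 'x pmf) \<Rightarrow> ('x \<Rightarrow> 'a) \<Rightarrow> nat \<Rightarrow> 'x \<Rightarrow> real" where
  "V_h H r p \<pi> h x = value_togo r p \<pi> (H + 1 - h) x"

definition V :: "nat \<Rightarrow> ('x \<Rightarrow> 'a \<Rightarrow> real) \<Rightarrow> ('x \<Rightarrow> 'a \<Rightarrow> 'x pmf) \<Rightarrow> 'x \<Rightarrow> ('x \<Rightarrow> 'a) \<Rightarrow> real" where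
  "V H r p x1 \<pi> = V_h H r p \<pi> 1 x1"

definition eta :: "('x \<Rightarrow> 'a::finite \<Rightarrow> real) \<Rightarrow> ('x \<Rightarrow> 'a \<Rightarrow> 'x pmf) \<Rightarrow> 'x
    \<Rightarrow> ('x \<Rightarrow> 'a \<Rightarrow> real) \<Rightarrow> ('x \<Rightarrow> 'a \<Rightarrow> real) \<Rightarrow> nat \<Rightarrow> real" where
  "eta r p x1 f g h = measure_pmf.expectation (D p x1 (greedy g) h)
     (\<lambda>x. measure_pmf.expectation (p x (greedy f x))
        (\<lambda>x'. r x (greedy f x) + f x' (greedy f x')))"

end

theory Submission
  imports Defs
begin

lemma int_bdd:
  fixes f :: "'b \<Rightarrow> real"
  assumes "\<And>x. \<bar>f x\<bar> \<le> B" shows "integrable (measure_pmf M) f"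
  by (rule measure_pmf.integrable_const_bound[where B=B]) (auto simp: assms)

lemma int_bind:
  fixes f :: "'b \<Rightarrow> real"
  assumes "\<And>x. \<bar>f x\<bar> \<le> B"
  shows "measure_pmf.expectation (bind_pmf M N) f = measure_pmf.expectation M (\<lambda>x. measure_pmf.expectation (N x) f)"
  unfolding measure_pmf_bind
  apply (rule integral_bind[where K="count_space UNIV" and B=B and B'=1])
  using assms measurable_measure_pmf[of N] by (auto simp: measure_pmf.emeasure_space_1 measure_pmf.prob_space_axioms prob_space_imp_subprob_space measurable_def)

lemma vt_bdd: assumes "\<And>x a. 0 \<le> r x a \<and> r x a \<le> 1"
  shows "0 \<le> value_togo r p \<pi> m x \<and> value_togo r p \<pi> m x \<le> real m"
proof (induction m arbitrary: x)
  case 0 then show ?case by simp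
next
  case (Suc m)
  have i1: "0 \<le> measure_pmf.expectation (p x (\<pi> x)) (value_togo r p \<pi> m)"
    using Suc by (intro integral_nonneg_AE) auto
  have i2: "measure_pmf.expectation (p x (\<pi> x)) (value_togo r p \<pi> m) \<le> real m"
    using Suc by (intro measure_pmf.integral_le_const) (auto intro!: int_bdd[where B="real m"] simp: abs_le_iff)
  show ?case using i1 i2 assms[of x "\<pi> x"] by simp
qed


lemma exp_abs_bdd:
  fixes f :: "'b \<Rightarrow> real"
  assumes "\<And>x. \<bar>f x\<bar> \<le> B" shows "\<bar>measure_pmf.expectation M f\<bar> \<le> B"
proof -
  have i: "integrable (measure_pmf M) f" using int_bdd assms by blast
  have "measure_pmf.expectation M f \<le> B"
    using assms by (intro measure_pmf.integral_le_const[OF i]) (auto simp: abs_le_iff)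
  moreover have "- B \<le> measure_pmf.expectation M f"
  proof (intro measure_pmf.integral_ge_const[OF i] AE_I2)
    fix x show "- B \<le> f x" using assms[of x] by linarith
  qed
  ultimately show ?thesis by simp
qed

lemma vt_abs: assumes "\<And>x a. 0 \<le> r x a \<and> r x a \<le> 1"
  shows "\<bar>value_togo r p \<pi> m x\<bar> \<le> real m"
  using vt_bdd[where p=p and \<pi>=\<pi> and m=m and x=x, OF assms] by simp

lemma sd_layer:
  assumes l1: "layer x1 = 1"
    and layered: "\<And>x a x'. 1 \<le> layer x \<Longrightarrow> layer x \<le> H \<Longrightarrow> x' \<in> set_pmf (p x a)
                    \<Longrightarrow> layer x' = layer x + 1"
  shows "k \<le> H \<Longrightarrow> x \<in> set_pmf (state_dist p x1 \<pi> k) \<Longrightarrow> layer x = Suc k"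
proof (induction k arbitrary: x)
  case 0 then show ?case using l1 by simp
next
  case (Suc k)
  then obtain y where y: "y \<in> set_pmf (state_dist p x1 \<pi> k)" "x \<in> set_pmf (p y (\<pi> y))" by auto
  have "layer y = Suc k" using Suc y by simp
  then show ?case using layered[OF _ _ y(2)] Suc by simp
qed

lemma sd_agree:
  assumes l1: "layer x1 = 1"
    and layered: "\<And>x a x'. 1 \<le> layer x \<Longrightarrow> layer x \<le> H \<Longrightarrow> x' \<in> set_pmf (p x a)
                    \<Longrightarrow> layer x' = layer x + 1"
    and agree: "\<And>x. layer x < h \<Longrightarrow> \<pi>1 x = \<pi>2 x" and hH: "h \<le> H + 1"
  shows "k < h \<Longrightarrow> state_dist p x1 \<pi>1 k = state_dist p x1 \<pi>2 k"
proof (induction k)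
  case 0 then show ?case by simp
next
  case (Suc k)
  have L: "layer x = Suc k" if "x \<in> set_pmf (state_dist p x1 \<pi>1 k)" for x
  proof (rule sd_layer[of layer x1 H p k x \<pi>1, OF l1 layered])
    show "k \<le> H" using Suc.prems hH by simp
  qed (use that in auto)
  have "\<And>x. x \<in> set_pmf (state_dist p x1 \<pi>1 k) \<Longrightarrow> \<pi>1 x = \<pi>2 x"
    using L Suc.prems agree by force
  then show ?case using Suc by (auto intro!: bind_pmf_cong)
qed

lemma vt_decomp:
  assumes rb: "\<And>x a. 0 \<le> r x a \<and> r x a \<le> 1"
  shows "j \<le> H \<Longrightarrow> value_togo r p \<pi> H x1 =
     (\<Sum>k<j. measure_pmf.expectation (state_dist p x1 \<pi> k) (\<lambda>x. r x (\<pi> x)))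
     + measure_pmf.expectation (state_dist p x1 \<pi> j) (value_togo r p \<pi> (H - j))"
proof (induction j)
  case 0 then show ?case by simp
next
  case (Suc j)
  have HS: "H - j = Suc (H - Suc j)" using Suc.prems by simp
  have b1: "\<bar>r x (\<pi> x)\<bar> \<le> 1" for x using rb[of x "\<pi> x"] by simp
  have b2: "\<bar>value_togo r p \<pi> (H - Suc j) x\<bar> \<le> real (H - Suc j)" for x
    using vt_abs[where r=r, OF rb] by blast
  have b3: "\<bar>measure_pmf.expectation (p x (\<pi> x)) (value_togo r p \<pi> (H - Suc j))\<bar> \<le> real (H - Suc j)" for x
    using b2 by (intro exp_abs_bdd) 
  have "measure_pmf.expectation (state_dist p x1 \<pi> j) (value_togo r p \<pi> (H - j))
    = measure_pmf.expectation (state_dist p x1 \<pi> j) (\<lambda>x. r x (\<pi> x) + measure_pmf.expectation (p x (\<pi> x)) (value_togo r p \<pi> (H - Suc j)))"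
    unfolding HS by (rule Bochner_Integration.integral_cong) auto
  also have "\<dots> = measure_pmf.expectation (state_dist p x1 \<pi> j) (\<lambda>x. r x (\<pi> x))
     + measure_pmf.expectation (state_dist p x1 \<pi> j) (\<lambda>x. measure_pmf.expectation (p x (\<pi> x)) (value_togo r p \<pi> (H - Suc j)))"
    by (intro Bochner_Integration.integral_add int_bdd[OF b1] int_bdd[OF b3])
  also have "measure_pmf.expectation (state_dist p x1 \<pi> j) (\<lambda>x. measure_pmf.expectation (p x (\<pi> x)) (value_togo r p \<pi> (H - Suc j)))
     = measure_pmf.expectation (state_dist p x1 \<pi> (Suc j)) (value_togo r p \<pi> (H - Suc j))"
    by (simp add: int_bind[OF b2])
  finally show ?case using Suc by simp
qed


lemma pmf_int_cong:
  fixes f g :: "'b \<Rightarrow> real"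
  assumes "\<And>x. x \<in> set_pmf M \<Longrightarrow> f x = g x"
  shows "measure_pmf.expectation M f = measure_pmf.expectation M g"
  using assms by (intro integral_cong_AE) (auto simp: AE_measure_pmf_iff)

lemma V_decomp:
  assumes l1: "layer x1 = 1"
    and layered: "\<And>x a x'. 1 \<le> layer x \<Longrightarrow> layer x \<le> H \<Longrightarrow> x' \<in> set_pmf (p x a)
                    \<Longrightarrow> layer x' = layer x + 1"
    and rb: "\<And>x a. 0 \<le> r x a \<and> r x a \<le> 1"
    and h1: "1 \<le> h" and hH: "h \<le> H"
    and fb: "\<And>x a. \<bar>f x a\<bar> \<le> 1"
    and agree: "\<And>x. layer x < h \<Longrightarrow> greedy f x = greedy g x"
  shows "V H r p x1 (greedy f) =
     (\<Sum>k<h-1. measure_pmf.expectation (state_dist p x1 (greedy g) k) (\<lambda>x. r x (greedy g x)))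
     + eta r p x1 f g h
     + (measure_pmf.expectation (D p x1 (greedy f) (h + 1)) (\<lambda>x'. V_h H r p (greedy f) (h + 1) x')
        - measure_pmf.expectation (D p x1 (greedy f) (h + 1)) (\<lambda>x'. f x' (greedy f x')))"
proof -
  let ?E = "measure_pmf.expectation"
  let ?sd = "state_dist p x1"
  define \<pi> where "\<pi> = greedy f"
  define \<pi>g where "\<pi>g = greedy g"
  have ag: "\<And>x. layer x < h \<Longrightarrow> \<pi> x = \<pi>g x" using agree by (simp add: \<pi>_def \<pi>g_def)
  have sdeq: "?sd \<pi> k = ?sd \<pi>g k" if "k < h" for k
    using sd_agree[of layer x1 H p h \<pi> \<pi>g k, OF l1 layered ag] hH that by simp
  have hS: "h = Suc (h - 1)" using h1 by simp
  have V1: "V H r p x1 \<pi> = (\<Sum>k<h. ?E (?sd \<pi> k) (\<lambda>x. r x (\<pi> x))) + ?E (?sd \<pi> h) (value_togo r p \<pi> (H - h))"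
  proof -
    have "value_togo r p \<pi> H x1 = (\<Sum>k<h. ?E (?sd \<pi> k) (\<lambda>x. r x (\<pi> x))) + ?E (?sd \<pi> h) (value_togo r p \<pi> (H - h))"
      by (rule vt_decomp) (use rb hH in auto)
    then show ?thesis by (simp add: V_def V_h_def)
  qed
  have "(\<Sum>k<h. ?E (?sd \<pi> k) (\<lambda>x. r x (\<pi> x))) = (\<Sum>k<h-1. ?E (?sd \<pi> k) (\<lambda>x. r x (\<pi> x))) + ?E (?sd \<pi> (h-1)) (\<lambda>x. r x (\<pi> x))"
    by (subst hS) simp
  moreover have "(\<Sum>k<h-1. ?E (?sd \<pi> k) (\<lambda>x. r x (\<pi> x))) = (\<Sum>k<h-1. ?E (?sd \<pi>g k) (\<lambda>x. r x (\<pi>g x)))"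
  proof (rule sum.cong[OF refl])
    fix k assume k: "k \<in> {..<h-1}"
    have L: "layer x = Suc k" if "x \<in> set_pmf (?sd \<pi>g k)" for x
    proof (rule sd_layer[of layer x1 H p k x \<pi>g, OF l1 layered])
      show "k \<le> H" using k hH by simp
    qed (use that in auto)
    show "?E (?sd \<pi> k) (\<lambda>x. r x (\<pi> x)) = ?E (?sd \<pi>g k) (\<lambda>x. r x (\<pi>g x))"
      using k L ag by (subst sdeq) (auto intro!: pmf_int_cong)
  qed
  moreover have eta1: "eta r p x1 f g h = ?E (?sd \<pi> (h-1)) (\<lambda>x. r x (\<pi> x)) + ?E (?sd \<pi> h) (\<lambda>x'. f x' (\<pi> x'))"
  proof -
    have b1: "\<bar>r x (\<pi> x)\<bar> \<le> 1" for x using rb[of x "\<pi> x"] by simp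
    have b2: "\<bar>f x (\<pi> x)\<bar> \<le> 1" for x using fb by simp
    have b3: "\<bar>?E (p x (\<pi> x)) (\<lambda>x'. f x' (\<pi> x'))\<bar> \<le> 1" for x using b2 by (intro exp_abs_bdd)
    have "eta r p x1 f g h = ?E (?sd \<pi>g (h-1)) (\<lambda>x. ?E (p x (\<pi> x)) (\<lambda>x'. r x (\<pi> x) + f x' (\<pi> x')))"
      by (simp add: eta_def D_def \<pi>_def \<pi>g_def)
    also have "\<dots> = ?E (?sd \<pi> (h-1)) (\<lambda>x. r x (\<pi> x) + ?E (p x (\<pi> x)) (\<lambda>x'. f x' (\<pi> x')))"
      using h1 by (subst sdeq[symmetric]) (auto intro!: Bochner_Integration.integral_cong simp: Bochner_Integration.integral_add int_bdd[OF b2] measure_pmf.prob_space)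
    also have "\<dots> = ?E (?sd \<pi> (h-1)) (\<lambda>x. r x (\<pi> x)) + ?E (?sd \<pi> (h-1)) (\<lambda>x. ?E (p x (\<pi> x)) (\<lambda>x'. f x' (\<pi> x')))"
      by (intro Bochner_Integration.integral_add int_bdd[OF b1] int_bdd[OF b3])
    also have "?E (?sd \<pi> (h-1)) (\<lambda>x. ?E (p x (\<pi> x)) (\<lambda>x'. f x' (\<pi> x'))) = ?E (?sd \<pi> h) (\<lambda>x'. f x' (\<pi> x'))"
      by (subst (2) hS) (simp add: int_bind[OF b2])
    finally show ?thesis .
  qed
  moreover have "D p x1 \<pi> (h + 1) = ?sd \<pi> h" by (simp add: D_def)
  moreover have "V_h H r p \<pi> (h + 1) = value_togo r p \<pi> (H - h)" by (simp add: V_h_def fun_eq_iff)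
  ultimately show ?thesis unfolding \<pi>_def[symmetric] \<pi>g_def[symmetric] using V1 by simp
qed


theorem lemma12:
  fixes H :: nat and layer :: "'x \<Rightarrow> nat" and x1 :: 'x
    and p :: "'x \<Rightarrow> 'a::finite \<Rightarrow> 'x pmf" and r :: "'x \<Rightarrow> 'a \<Rightarrow> real"
    and F :: "('x \<Rightarrow> 'a \<Rightarrow> real) set" and g :: "'x \<Rightarrow> 'a \<Rightarrow> real" and h :: nat
    and P :: "('x \<Rightarrow> 'a \<Rightarrow> real) pmf" and C1 C2 C3 :: real
  assumes layer_x1: "layer x1 = 1"
    and layered: "\<And>x a x'. 1 \<le> layer x \<Longrightarrow> layer x \<le> H \<Longrightarrow> x' \<in> set_pmf (p x a)
                    \<Longrightarrow> layer x' = layer x + 1"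
    and r_bounded: "\<And>x a. 0 \<le> r x a \<and> r x a \<le> 1"
    and F_finite: "finite F"
    and F_range: "\<And>f x a. f \<in> F \<Longrightarrow> 0 \<le> f x a \<and> f x a \<le> 1"
    and F_vanish: "\<And>f x a. f \<in> F \<Longrightarrow> layer x = H + 1 \<Longrightarrow> f x a = 0"
    and g_in: "g \<in> F"
    and h_range: "1 \<le> h" "h \<le> H"
    and P_supp: "set_pmf P \<subseteq> F"
    and G_def: "G = map_pmf (\<lambda>f. concat_at layer g h f) P"
    and a: "\<And>f. f \<in> set_pmf G \<Longrightarrow> eta r p x1 f g h > eta r p x1 g g h - C1"
    and b: "\<bar>measure_pmf.expectation G (\<lambda>f. measure_pmf.expectation (D p x1 (greedy f) (h + 1))
                   (\<lambda>x'. V_h H r p (greedy f) (h + 1) x'))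
            - measure_pmf.expectation G (\<lambda>f. measure_pmf.expectation (D p x1 (greedy f) (h + 1))
                   (\<lambda>x'. f x' (greedy f x')))\<bar> \<le> C2"
    and c: "\<bar>measure_pmf.expectation (D p x1 (greedy g) (h + 1)) (\<lambda>x'. V_h H r p (greedy g) (h + 1) x')
            - measure_pmf.expectation (D p x1 (greedy g) (h + 1)) (\<lambda>x'. g x' (greedy g x'))\<bar> \<le> C3"
  shows "measure_pmf.expectation G (\<lambda>f. V H r p x1 (greedy f)) \<ge> V H r p x1 (greedy g) - (C1 + C2 + C3)"
proof -
  let ?E = "measure_pmf.expectation"
  define S where "S = (\<Sum>k<h-1. ?E (state_dist p x1 (greedy g) k) (\<lambda>x. r x (greedy g x)))"
  define \<Delta> where "\<Delta> f = ?E (D p x1 (greedy f) (h + 1)) (\<lambda>x'. V_h H r p (greedy f) (h + 1) x')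
        - ?E (D p x1 (greedy f) (h + 1)) (\<lambda>x'. f x' (greedy f x'))" for f :: "'x \<Rightarrow> 'a \<Rightarrow> real"
  have dec: "V H r p x1 (greedy f) = S + eta r p x1 f g h + \<Delta> f"
    if fb: "\<And>x a. \<bar>f x a\<bar> \<le> 1" and ag: "\<And>x. layer x < h \<Longrightarrow> greedy f x = greedy g x" for f
    unfolding S_def \<Delta>_def
    using V_decomp[where layer=layer and H=H and r=r and p=p and h=h and f=f and g=g, OF layer_x1 layered r_bounded h_range fb ag] by simp
  have gb: "\<bar>g x a\<bar> \<le> 1" for x a using F_range[OF g_in, of x a] by simp
  have decg: "V H r p x1 (greedy g) = S + eta r p x1 g g h + \<Delta> g" by (rule dec[OF gb]) simp
  have finG: "finite (set_pmf G)" using P_supp F_finite unfolding G_def by (auto intro: finite_subset)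
  have decf: "V H r p x1 (greedy f) = S + eta r p x1 f g h + \<Delta> f" if f: "f \<in> set_pmf G" for f
  proof -
    obtain f' where f': "f' \<in> set_pmf P" "f = concat_at layer g h f'" using f unfolding G_def by auto
    have fF: "f' \<in> F" using f' P_supp by auto
    have fb: "\<bar>f x a\<bar> \<le> 1" for x a using F_range[OF fF, of x a] gb[of x a]
      by (simp add: f'(2) concat_at_def)
    have ag: "greedy f x = greedy g x" if "layer x < h" for x
    proof -
      have "f x = g x" using that by (simp add: f'(2) concat_at_def fun_eq_iff)
      then show ?thesis by (simp add: greedy_def)
    qed
    show ?thesis by (rule dec) (rule fb, erule ag)
  qed
  have int: "integrable (measure_pmf G) u" for u :: "('x \<Rightarrow> 'a \<Rightarrow> real) \<Rightarrow> real"
    by (rule integrable_measure_pmf_finite[OF finG])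
  have "?E G (\<lambda>f. V H r p x1 (greedy f)) = ?E G (\<lambda>f. S + eta r p x1 f g h + \<Delta> f)"
    by (rule pmf_int_cong) (rule decf)
  also have "\<dots> = S + ?E G (\<lambda>f. eta r p x1 f g h) + ?E G \<Delta>"
    by (simp add: Bochner_Integration.integral_add[OF int int] measure_pmf.prob_space)
  finally have e1: "?E G (\<lambda>f. V H r p x1 (greedy f)) = S + ?E G (\<lambda>f. eta r p x1 f g h) + ?E G \<Delta>" .
  have e2: "?E G (\<lambda>f. eta r p x1 f g h) \<ge> eta r p x1 g g h - C1"
    using a by (intro measure_pmf.integral_ge_const[OF int]) (auto simp: AE_measure_pmf_iff less_imp_le)
  have "?E G \<Delta> = ?E G (\<lambda>f. ?E (D p x1 (greedy f) (h + 1)) (\<lambda>x'. V_h H r p (greedy f) (h + 1) x'))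
        - ?E G (\<lambda>f. ?E (D p x1 (greedy f) (h + 1)) (\<lambda>x'. f x' (greedy f x')))"
    unfolding \<Delta>_def by (rule Bochner_Integration.integral_diff[OF int int])
  then have e3: "?E G \<Delta> \<ge> - C2" using b by linarith
  have e4: "\<Delta> g \<le> C3" using c unfolding \<Delta>_def by linarith
  show ?thesis using e1 e2 e3 e4 decg by linarith
qed


end
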